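(* Let $\Gamma=\mathbb F_r$ and let $\varepsilon_c=\varepsilon_c(r)$ be the constant defined below. If $\varepsilon<\varepsilon_c$, then for all sufficiently small $\delta>0$, \[\liminf_{n\to\infty}\frac1n\log\mathbb P\Big(\frac{\mathsf{mcut}(\sigma_n)}{rn}<\varepsilon+\delta\Big)<0,\] where $\sigma_n\in\mathrm{Hom}(\mathbb F_r,\mathrm{Sym}([n]))$ is uniformly random.
   Context: $\Gamma=\mathbb F_r$ is the free group on $s_1,\dots,s_r$. For a finite set $V$ and $\sigma\in\mathrm{Hom}(\mathbb F_r,\mathrm{Sym}(V))$, the graph of $\sigma$ is the multigraph with one edge $\{v,\sigma(s_i)v\}$ for each $v\in V$, $i\in[r]$ (so $|V|r$ edges). A bisection of $V$ is a partition $V=V_1\sqcup V_2$ with $||V_1|-|V_2||\le1$; its cut size is the number of edges with endpoints in different parts; $\mathsf{mcut}(\sigma)$ is the minimum cut size over bisections of the graph of $\sigma$. $\sigma_n\in\mathrm{Hom}(\mathbb F_r,\mathrm{Sym}([n]))$ is uniformly random, i.e. $\sigma_n(s_1),\dots,\sigma_n(s_r)$ are independent uniform permutations of $[n]$. The constant $\varepsilon_c=\varepsilon_c(r)$ is the limit in probability of $\mathsf{mcut}(\sigma_n)/(rn)$ as $n\to\infty$ (its existence, with $\varepsilon_c=\frac12-\mathsf P_*\frac1{\sqrt{2r}}+o_r(r^{-1/2})$, $\mathsf P_*\approx0.7632$, is due to Dembo–Montanari–Sen, and may be assumed). *)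

theory Defs
  imports "HOL-Probability.Probability" "HOL-Combinatorics.Permutations"
begin

text \<open>A homomorphism from the free group F_r (generators s_0,...,s_{r-1}) to Sym([n]),
  with [n] = {0..<n}, is determined by the images of the generators; we represent it
  by the tuple of these r permutations.\<close>
definition homs :: "nat \<Rightarrow> nat \<Rightarrow> (nat \<Rightarrow> nat \<Rightarrow> nat) set" where
  "homs r n = PiE {..<r} (\<lambda>_. {p. p permutes {..<n}})"

definition unif_hom :: "nat \<Rightarrow> nat \<Rightarrow> (nat \<Rightarrow> nat \<Rightarrow> nat) pmf" where
  "unif_hom r n = pmf_of_set (homs r n)"

text \<open>Graph of sigma: one edge {v, sigma(s_i) v} for each v < n, i < r (multigraph).
  Cut size of a part V1: number of such edges with endpoints in different parts.\<close>
definition cut_size :: "nat \<Rightarrow> nat \<Rightarrow> (nat \<Rightarrow> nat \<Rightarrow> nat) \<Rightarrow> nat set \<Rightarrow> nat" where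
  "cut_size r n \<sigma> V1 = card {(v, i). v < n \<and> i < r \<and> ((v \<in> V1) \<noteq> (\<sigma> i v \<in> V1))}"

definition is_bisection :: "nat \<Rightarrow> nat set \<Rightarrow> bool" where
  "is_bisection n V1 \<longleftrightarrow> V1 \<subseteq> {..<n} \<and>
     \<bar>int (card V1) - int (card ({..<n} - V1))\<bar> \<le> 1"

definition mcut :: "nat \<Rightarrow> nat \<Rightarrow> (nat \<Rightarrow> nat \<Rightarrow> nat) \<Rightarrow> nat" where
  "mcut r n \<sigma> = Min {cut_size r n \<sigma> V1 | V1. is_bisection n V1}"

definition mcut_ratio :: "nat \<Rightarrow> nat \<Rightarrow> (nat \<Rightarrow> nat \<Rightarrow> nat) \<Rightarrow> real" where
  "mcut_ratio r n \<sigma> = real (mcut r n \<sigma>) / (real r * real n)"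

definition elog :: "real \<Rightarrow> ereal" where
  "elog p = (if p = 0 then - \<infinity> else ereal (ln p))"

end

theory Submission
  imports Defs
begin


definition avg :: "'a set \<Rightarrow> ('a \<Rightarrow> real) \<Rightarrow> real" where
  "avg A f = (\<Sum>x\<in>A. f x) / real (card A)"

lemma avg_mono: "finite A \<Longrightarrow> (\<And>x. x \<in> A \<Longrightarrow> f x \<le> g x) \<Longrightarrow> avg A f \<le> avg A g"
  unfolding avg_def by (intro divide_right_mono sum_mono) auto

lemma avg_const: "finite A \<Longrightarrow> A \<noteq> {} \<Longrightarrow> avg A (\<lambda>_. k) = k"
  unfolding avg_def by simp

lemma avg_cmult: "avg A (\<lambda>x. k * f x) = k * avg A f"
  unfolding avg_def by (simp add: sum_distrib_left)

lemma avg_diff: "avg A (\<lambda>x. f x - g x) = avg A f - avg A g"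
  unfolding avg_def by (simp add: sum_subtractf diff_divide_distrib)

lemma hoeffding_finite:
  assumes "finite S" "S \<noteq> {}" "\<And>x. x \<in> S \<Longrightarrow> g x \<in> {a..b}" "l > 0"
  shows "avg S (\<lambda>x. exp (l * (g x - avg S g))) \<le> exp (l^2 * (b-a)^2/8)"
proof -
  interpret interval_bounded_random_variable "measure_pmf (pmf_of_set S)" g a b
    by unfold_locales (use assms in \<open>auto simp: AE_measure_pmf_iff\<close>)
  have E: "measure_pmf.expectation (pmf_of_set S) g = avg S g"
    using integral_pmf_of_set[OF assms(2,1), of g] unfolding avg_def by simp
  have "nn_integral (measure_pmf (pmf_of_set S)) (\<lambda>x. exp (l*(g x - measure_pmf.expectation (pmf_of_set S) g)))
        \<le> ennreal (exp (l^2 * (b-a)^2/8))"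
    using Hoeffdings_lemma_nn_integral[OF assms(4)] by simp
  also have "nn_integral (measure_pmf (pmf_of_set S)) (\<lambda>x. exp (l*(g x - measure_pmf.expectation (pmf_of_set S) g)))
     = ennreal (avg S (\<lambda>x. exp (l * (g x - avg S g))))"
    using assms by (simp add: nn_integral_pmf_of_set[OF assms(2,1)] E avg_def sum_ennreal ennreal_of_nat_eq_real_of_nat divide_ennreal sum_nonneg card_gt_0_iff)
  finally show ?thesis by (simp add: ennreal_le_iff)
qed

lemma listset_Cons_eq: "listset (S # Ss) = (\<lambda>(a,ys). a # ys) ` (S \<times> listset Ss)"
  by (auto simp: set_Cons_def)

declare listset.simps(2)[simp del]

lemma listset_length: "xs \<in> listset Ss \<Longrightarrow> length xs = length Ss"
  by (induction Ss arbitrary: xs) (auto simp: listset_Cons_eq)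

lemma listset_finite_ne:
  assumes "\<forall>S\<in>set Ss. finite S \<and> S \<noteq> {}"
  shows "finite (listset Ss) \<and> listset Ss \<noteq> {}"
  using assms
proof (induction Ss)
  case Nil then show ?case by simp
next
  case (Cons S Ss)
  then show ?case by (auto simp: listset_Cons_eq)
qed

lemma sum_listset_Cons:
  "(\<Sum>xs\<in>listset (S # Ss). h xs) = (\<Sum>a\<in>S. \<Sum>ys\<in>listset Ss. h (a # ys))"
proof -
  have inj: "inj_on (\<lambda>(a,ys). a # ys) (S \<times> listset Ss)" by (auto simp: inj_on_def)
  show ?thesis
    unfolding listset_Cons_eq sum.reindex[OF inj] sum.cartesian_product
    by (rule sum.cong) auto
qed

lemma card_listset_Cons:
  "card (listset (S # Ss)) = card S * card (listset Ss)"
proof -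
  have inj: "inj_on (\<lambda>(a,ys). a # ys) (S \<times> listset Ss)" by (auto simp: inj_on_def)
  show ?thesis unfolding listset_Cons_eq card_image[OF inj] by (simp add: card_cartesian_product)
qed

lemma avg_listset_Cons:
  assumes "finite S" "finite (listset Ss)" "listset Ss \<noteq> {}"
  shows "avg (listset (S # Ss)) h = avg S (\<lambda>a. avg (listset Ss) (\<lambda>ys. h (a # ys)))"
  using assms unfolding avg_def sum_listset_Cons card_listset_Cons
  by (simp add: sum_divide_distrib[symmetric] card_gt_0_iff field_simps)

definition onediff :: "'a list \<Rightarrow> 'a list \<Rightarrow> bool" where
  "onediff xs ys \<longleftrightarrow> (\<exists>us a b vs. xs = us @ a # vs \<and> ys = us @ b # vs)"

lemma onediff_sym: "onediff xs ys \<Longrightarrow> onediff ys xs"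
  unfolding onediff_def by blast

lemma onediff_Cons: "onediff xs ys \<Longrightarrow> onediff (a # xs) (a # ys)"
  unfolding onediff_def by (metis append_Cons)

lemma onediff_head: "onediff (a # xs) (b # xs)"
  unfolding onediff_def by (metis append_Nil)

lemma mcd_mgf:
  assumes "\<forall>S\<in>set Ss. finite S \<and> S \<noteq> {}" "c \<ge> 0" "l > 0"
    "\<forall>xs\<in>listset Ss. \<forall>ys\<in>listset Ss. onediff xs ys \<longrightarrow> f xs - f ys \<le> c"
  shows "avg (listset Ss) (\<lambda>xs. exp (l * (f xs - avg (listset Ss) f)))
           \<le> exp (l^2 * c^2 * real (length Ss) / 2)"
  using assms
proof (induction Ss arbitrary: f)
  case Nil
  then show ?case by (simp add: avg_def)
next
  case (Cons S Ss)
  define L where "L = listset Ss"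
  have S: "finite S" "S \<noteq> {}" using Cons.prems by auto
  have L: "finite L" "L \<noteq> {}" using Cons.prems listset_finite_ne[of Ss] by (auto simp: L_def)
  define g where "g a = avg L (\<lambda>ys. f (a # ys))" for a
  define E where "E = avg S g"
  define K where "K = exp (l^2 * c^2 * real (length Ss) / 2)"
  have Ef: "avg (listset (S # Ss)) f = E"
    unfolding E_def g_def L_def by (rule avg_listset_Cons) (use S L in \<open>auto simp: L_def\<close>)
  have IH: "avg L (\<lambda>ys. exp (l * (f (a # ys) - g a))) \<le> K" if a: "a \<in> S" for a
    unfolding L_def g_def K_def
  proof (rule Cons.IH)
    show "\<forall>xs\<in>listset Ss. \<forall>ys\<in>listset Ss. onediff xs ys \<longrightarrow> f (a # xs) - f (a # ys) \<le> c"
      using Cons.prems(4) a by (auto simp: listset_Cons_eq dest: onediff_Cons[of _ _ a])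
  qed (use Cons.prems in auto)
  obtain a0 where a0: "a0 \<in> S" using S by auto
  have grange: "g a \<in> {g a0 - c .. g a0 + c}" if a: "a \<in> S" for a
  proof -
    have 1: "g a - g a' \<le> c" if "a \<in> S" "a' \<in> S" for a a'
    proof -
      have "g a - g a' = avg L (\<lambda>ys. f (a # ys) - f (a' # ys))"
        unfolding g_def avg_diff ..
      also have "\<dots> \<le> avg L (\<lambda>_. c)"
        using Cons.prems(4) that L(1) by (intro avg_mono) (auto simp: L_def listset_Cons_eq intro!: onediff_head)
      also have "\<dots> = c" using L by (simp add: avg_const)
      finally show ?thesis .
    qed
    show ?thesis using 1[OF a a0] 1[OF a0 a] by auto
  qed
  have hoef: "avg S (\<lambda>a. exp (l * (g a - E))) \<le> exp (l^2 * ((g a0 + c) - (g a0 - c))^2 / 8)"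
    unfolding E_def by (rule hoeffding_finite) (use S grange Cons.prems in auto)
  have "avg (listset (S # Ss)) (\<lambda>xs. exp (l * (f xs - E)))
     = avg S (\<lambda>a. avg L (\<lambda>ys. exp (l * (g a - E)) * exp (l * (f (a # ys) - g a))))"
    unfolding L_def by (subst avg_listset_Cons) (use S L in \<open>auto simp: L_def simp flip: exp_add intro!: arg_cong[where f=exp] simp: algebra_simps\<close>)
  also have "\<dots> = avg S (\<lambda>a. exp (l * (g a - E)) * avg L (\<lambda>ys. exp (l * (f (a # ys) - g a))))"
    by (simp add: avg_cmult)
  also have "\<dots> \<le> avg S (\<lambda>a. exp (l * (g a - E)) * K)"
    using S IH by (intro avg_mono mult_left_mono) auto
  also have "\<dots> = K * avg S (\<lambda>a. exp (l * (g a - E)))"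
    by (simp add: avg_cmult[symmetric] mult.commute)
  also have "\<dots> \<le> K * exp (l^2 * ((g a0 + c) - (g a0 - c))^2 / 8)"
    using hoef by (intro mult_left_mono) (auto simp: K_def)
  also have "\<dots> = exp (l^2 * c^2 * real (length (S # Ss)) / 2)"
    unfolding K_def by (simp add: exp_add[symmetric] power2_eq_square algebra_simps add_divide_distrib)
  finally show ?case by (simp add: Ef)
qed

lemma mcd_tail:
  assumes "\<forall>S\<in>set Ss. finite S \<and> S \<noteq> {}" "c > 0" "t > 0" "length Ss > 0"
    "\<forall>xs\<in>listset Ss. \<forall>ys\<in>listset Ss. onediff xs ys \<longrightarrow> f xs - f ys \<le> c"
  shows "real (card {xs\<in>listset Ss. f xs \<le> avg (listset Ss) f - t})
           \<le> real (card (listset Ss)) * exp (- (t^2) / (2 * c^2 * real (length Ss)))"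
proof -
  define L where "L = listset Ss"
  define N where "N = real (length Ss)"
  have N: "N > 0" using assms by (simp add: N_def)
  have L: "finite L" "L \<noteq> {}" using listset_finite_ne[OF assms(1)] by (auto simp: L_def)
  define h where "h xs = - f xs" for xs
  define l where "l = t / (c^2 * N)"
  have l: "l > 0" using assms N by (simp add: l_def)
  have avgh: "avg L h = - avg L f" unfolding h_def avg_def by (simp add: sum_negf)
  have mgf: "avg L (\<lambda>xs. exp (l * (h xs - avg L h))) \<le> exp (l^2 * c^2 * N / 2)"
    unfolding L_def N_def
    by (rule mcd_mgf) (use assms l in \<open>auto simp: h_def intro: onediff_sym\<close>)
  define A where "A = {xs\<in>L. f xs \<le> avg L f - t}"
  have "real (card A) * exp (l * t) = (\<Sum>xs\<in>A. exp (l * t))" by simp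
  also have "\<dots> \<le> (\<Sum>xs\<in>A. exp (l * (h xs - avg L h)))"
    by (intro sum_mono) (use l in \<open>auto simp: A_def avgh h_def\<close>)
  also have "\<dots> \<le> (\<Sum>xs\<in>L. exp (l * (h xs - avg L h)))"
    by (intro sum_mono2) (use L in \<open>auto simp: A_def\<close>)
  also have "\<dots> = real (card L) * avg L (\<lambda>xs. exp (l * (h xs - avg L h)))"
    using L by (simp add: avg_def)
  also have "\<dots> \<le> real (card L) * exp (l^2 * c^2 * N / 2)"
    by (intro mult_left_mono mgf) auto
  finally have "real (card A) \<le> real (card L) * exp (l^2 * c^2 * N / 2) / exp (l * t)"
    by (simp add: field_simps)
  also have "\<dots> = real (card L) * exp (l^2 * c^2 * N / 2 - l * t)"
    by (simp add: exp_diff)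
  also have "l^2 * c^2 * N / 2 - l * t = - (t^2) / (2 * c^2 * N)"
    using assms N unfolding l_def by (simp add: field_simps power2_eq_square)
  finally show ?thesis by (simp add: A_def L_def N_def)
qed

fun FY :: "nat list \<Rightarrow> nat \<Rightarrow> nat" where
  "FY [] = id"
| "FY (j # js) = Transposition.transpose (length js) j \<circ> FY js"

fun R :: "nat \<Rightarrow> nat set list" where
  "R 0 = []"
| "R (Suc k) = {..k} # R k"

lemma R_ok: "\<forall>S\<in>set (R k). finite S \<and> S \<noteq> {}"
  by (induction k) auto

lemma length_R [simp]: "length (R k) = k"
  by (induction k) auto

lemma FY_Nil: "FY [] = id" by (simp add: id_def)
lemma FY_Cons: "FY (j # js) = Transposition.transpose (length js) j \<circ> FY js" by (rule ext) simp
declare FY.simps[simp del]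
lemma FY_Cons_app: "FY (j # js) x = Transposition.transpose (length js) j (FY js x)" by (simp add: FY_Cons)

lemma FY_bij: "bij (FY js)"
  by (induction js) (simp_all only: FY_Nil FY_Cons bij_comp bij_id bij_transpose)

lemma FY_perm: "js \<in> listset (R k) \<Longrightarrow> FY js permutes {..<k}"
proof (induction k arbitrary: js)
  case 0 then have "js = []" by simp
  then show ?case by (simp only: FY_Nil permutes_id)
next
  case (Suc k)
  then obtain j js' where js: "js = j # js'" "j \<le> k" "js' \<in> listset (R k)"
    by (auto simp: listset_Cons_eq)
  have len: "length js' = k" using listset_length[OF js(3)] by simp
  have "FY js' permutes {..<Suc k}"
    by (rule permutes_subset[OF Suc.IH[OF js(3)]]) auto
  moreover have "Transposition.transpose k j permutes {..<Suc k}"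
    using js by (intro permutes_swap_id) auto
  ultimately show ?case using js len by (simp only: permutes_compose FY_Cons)
qed

lemma FY_inj: "inj_on FY (listset (R k))"
proof (induction k)
  case 0 then show ?case by simp
next
  case (Suc k)
  show ?case
  proof (rule inj_onI)
    fix xs ys assume xs: "xs \<in> listset (R (Suc k))" and ys: "ys \<in> listset (R (Suc k))"
      and eq: "FY xs = FY ys"
    obtain j js where xs': "xs = j # js" "js \<in> listset (R k)"
      using xs by (auto simp: listset_Cons_eq)
    obtain j' js' where ys': "ys = j' # js'" "js' \<in> listset (R k)"
      using ys by (auto simp: listset_Cons_eq)
    have l: "length js = k" "length js' = k"
      using listset_length[OF xs'(2)] listset_length[OF ys'(2)] by auto
    have k1: "FY js k = k" by (rule permutes_not_in[OF FY_perm[OF xs'(2)]]) auto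
    have k2: "FY js' k = k" by (rule permutes_not_in[OF FY_perm[OF ys'(2)]]) auto
    have "FY xs k = j" using k1 l by (simp add: xs' FY_Cons_app)
    moreover have "FY ys k = j'" using k2 l by (simp add: ys' FY_Cons_app)
    ultimately have jj: "j = j'" using eq by simp
    have "FY js = FY js'"
    proof
      fix x
      have "Transposition.transpose k j (FY js x) = Transposition.transpose k j (FY js' x)"
        using fun_cong[OF eq, of x] l jj by (simp add: xs' ys' FY_Cons_app)
      then show "FY js x = FY js' x" by (metis transpose_involutory)
    qed
    then have "js = js'" using Suc.IH xs'(2) ys'(2) by (auto dest: inj_onD)
    then show "xs = ys" using xs' ys' jj by simp
  qed
qed

lemma FY_surj: "q permutes {..<k} \<Longrightarrow> \<exists>js\<in>listset (R k). FY js = q"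
proof (induction k arbitrary: q)
  case 0 then show ?case by (auto simp: permutes_empty FY_Nil)
next
  case (Suc k)
  have ins: "{..<Suc k} = insert k {..<k}" by auto
  have "Transposition.transpose k (q k) \<circ> q permutes {..<k}"
    using permutes_insert_lemma[of q k "{..<k}"] Suc.prems ins by simp
  then obtain js where js: "js \<in> listset (R k)" "FY js = Transposition.transpose k (q k) \<circ> q"
    using Suc.IH by blast
  have qk: "q k \<le> k" using permutes_in_image[OF Suc.prems, of k] by auto
  have l: "length js = k" using listset_length[OF js(1)] by simp
  have "q k # js \<in> listset (R (Suc k))" using js qk by (auto simp: listset_Cons_eq)
  moreover have "FY (q k # js) = q" using js l by (simp add: FY_Cons o_assoc)
  ultimately show ?case by blast
qed

lemma FY_bij_betw: "bij_betw FY (listset (R k)) {p. p permutes {..<k}}"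
  unfolding bij_betw_def using FY_inj FY_perm FY_surj by fastforce

lemma FY_onediff_aux:
  "finite {x. FY (us @ a # vs) x \<noteq> FY (us @ b # vs) x} \<and>
   card {x. FY (us @ a # vs) x \<noteq> FY (us @ b # vs) x} \<le> 3"
proof (induction us)
  case Nil
  define p where "p = FY vs"
  define m where "m = length vs"
  have "{x. FY ([] @ a # vs) x \<noteq> FY ([] @ b # vs) x} \<subseteq> inv p ` {m, a, b}"
  proof
    fix x assume x: "x \<in> {x. FY ([] @ a # vs) x \<noteq> FY ([] @ b # vs) x}"
    have "p x \<in> {m, a, b}"
    proof (rule ccontr)
      assume "p x \<notin> {m, a, b}"
      then show False using x by (simp add: p_def m_def FY_Cons_app)
    qed
    moreover have "inv p (p x) = x" using FY_bij[of vs] by (simp add: p_def bij_def)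
    ultimately show "x \<in> inv p ` {m, a, b}" by (metis imageI)
  qed
  moreover have "card (inv p ` {m, a, b}) \<le> 3"
    by (rule order.trans[OF card_image_le]) (auto simp: card_insert_if)
  ultimately show ?case by (meson card_mono finite_imageI finite.emptyI finite_insert finite_subset le_trans)
next
  case (Cons u us)
  have "{x. FY ((u # us) @ a # vs) x \<noteq> FY ((u # us) @ b # vs) x}
        = {x. FY (us @ a # vs) x \<noteq> FY (us @ b # vs) x}"
    by (auto simp: FY_Cons_app, metis transpose_involutory)
  then show ?case using Cons.IH by simp
qed




lemma listset_Cons_mem: "x \<in> S \<Longrightarrow> ys \<in> listset Ss \<Longrightarrow> x # ys \<in> listset (S # Ss)"
  unfolding listset_Cons_eq by (rule image_eqI[where x="(x, ys)"]) auto

lemma listset_Cons_memE: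
  assumes "xs \<in> listset (S # Ss)"
  obtains x ys where "xs = x # ys" "x \<in> S" "ys \<in> listset Ss"
  using assms unfolding listset_Cons_eq by auto

lemma listset_append_iff:
  "xs \<in> listset (A @ B) \<longleftrightarrow> (\<exists>a b. xs = a @ b \<and> a \<in> listset A \<and> b \<in> listset B)"
proof (induction A arbitrary: xs)
  case Nil then show ?case by simp
next
  case (Cons S A)
  show ?case
  proof
    assume "xs \<in> listset ((S # A) @ B)"
    then obtain x ys where 1: "xs = x # ys" "x \<in> S" "ys \<in> listset (A @ B)"
      by (auto elim: listset_Cons_memE)
    then obtain a b where 2: "ys = a @ b" "a \<in> listset A" "b \<in> listset B"
      using Cons.IH by blast
    have "x # a \<in> listset (S # A)" using 1 2 by (intro listset_Cons_mem)
    then show "\<exists>a b. xs = a @ b \<and> a \<in> listset (S # A) \<and> b \<in> listset B"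
      using 1 2 by (intro exI[of _ "x # a"] exI[of _ b]) simp
  next
    assume "\<exists>a b. xs = a @ b \<and> a \<in> listset (S # A) \<and> b \<in> listset B"
    then obtain a b where 1: "xs = a @ b" "a \<in> listset (S # A)" "b \<in> listset B" by blast
    then obtain x a0 where 2: "a = x # a0" "x \<in> S" "a0 \<in> listset A"
      by (auto elim: listset_Cons_memE)
    have "a0 @ b \<in> listset (A @ B)" using Cons.IH 1 2 by blast
    then show "xs \<in> listset ((S # A) @ B)"
      using 1 2 by (simp add: listset_Cons_mem)
  qed
qed

fun Blk :: "nat \<Rightarrow> nat \<Rightarrow> nat set list" where
  "Blk n 0 = []"
| "Blk n (Suc r) = R n @ Blk n r"

fun Phi :: "nat \<Rightarrow> nat \<Rightarrow> nat list \<Rightarrow> (nat \<Rightarrow> nat \<Rightarrow> nat)" where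
  "Phi n 0 xs = (\<lambda>_. undefined)"
| "Phi n (Suc r) xs = (Phi n r (drop n xs))(r := FY (take n xs))"

lemma Blk_ok: "\<forall>S\<in>set (Blk n r). finite S \<and> S \<noteq> {}"
  using R_ok[of n] by (induction r) auto

lemma length_Blk [simp]: "length (Blk n r) = r * n"
  by (induction r) auto

lemma Phi_append: "a \<in> listset (R n) \<Longrightarrow> Phi n (Suc r) (a @ b) = (Phi n r b)(r := FY a)"
  using listset_length[of a "R n"] by simp

lemma Phi_bij: "bij_betw (Phi n r) (listset (Blk n r)) (homs r n)"
proof (induction r)
  case 0
  then show ?case by (simp add: homs_def bij_betw_def)
next
  case (Suc r)
  define P where "P = {p. p permutes {..<n}}"
  have hs: "homs (Suc r) n = (\<lambda>(y, g). g(r := y)) ` (P \<times> homs r n)"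
    unfolding homs_def P_def lessThan_Suc by (rule PiE_insert_eq)
  have combinj: "inj_on (\<lambda>(y, g). g(r := y)) (P \<times> homs r n)"
    unfolding homs_def P_def by (rule inj_combinator[where T="\<lambda>_. {p. p permutes {..<n}}"]) simp
  have inj: "inj_on (Phi n (Suc r)) (listset (Blk n (Suc r)))"
  proof (rule inj_onI)
    fix xs ys assume "xs \<in> listset (Blk n (Suc r))" "ys \<in> listset (Blk n (Suc r))"
      and eq: "Phi n (Suc r) xs = Phi n (Suc r) ys"
    then obtain a b a' b' where ab: "xs = a @ b" "a \<in> listset (R n)" "b \<in> listset (Blk n r)"
      and ab': "ys = a' @ b'" "a' \<in> listset (R n)" "b' \<in> listset (Blk n r)"
      by (auto simp: listset_append_iff)
    have "(\<lambda>(y, g). g(r := y)) (FY a, Phi n r b) = (\<lambda>(y, g). g(r := y)) (FY a', Phi n r b')"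
      using eq ab ab' by (simp del: Phi.simps add: Phi_append)
    moreover have "(FY a, Phi n r b) \<in> P \<times> homs r n" "(FY a', Phi n r b') \<in> P \<times> homs r n"
      using ab ab' FY_perm Suc.IH by (auto simp: P_def bij_betw_def)
    ultimately have "(FY a, Phi n r b) = (FY a', Phi n r b')"
      using inj_onD[OF combinj] by blast
    then have "FY a = FY a'" "Phi n r b = Phi n r b'" by auto
    then have "a = a'" "b = b'"
      using FY_inj[of n] Suc.IH ab ab' by (auto simp: bij_betw_def dest: inj_onD)
    then show "xs = ys" using ab ab' by simp
  qed
  have img: "Phi n (Suc r) ` listset (Blk n (Suc r)) = homs (Suc r) n"
  proof
    show "Phi n (Suc r) ` listset (Blk n (Suc r)) \<subseteq> homs (Suc r) n"
    proof
      fix z assume "z \<in> Phi n (Suc r) ` listset (Blk n (Suc r))"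
      then obtain a b where "z = Phi n (Suc r) (a @ b)" "a \<in> listset (R n)" "b \<in> listset (Blk n r)"
        by (auto simp: listset_append_iff)
      moreover have "FY a \<in> P" "Phi n r b \<in> homs r n"
        using FY_perm Suc.IH calculation by (auto simp: P_def bij_betw_def)
      ultimately show "z \<in> homs (Suc r) n"
        unfolding hs by (auto simp del: Phi.simps simp: Phi_append intro!: image_eqI[where x="(FY a, Phi n r b)"])
    qed
  next
    show "homs (Suc r) n \<subseteq> Phi n (Suc r) ` listset (Blk n (Suc r))"
    proof
      fix z assume "z \<in> homs (Suc r) n"
      then obtain y g where z: "z = g(r := y)" "y \<in> P" "g \<in> homs r n" unfolding hs by auto
      obtain a where a: "a \<in> listset (R n)" "FY a = y" using FY_surj z(2) by (auto simp: P_def)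
      obtain b where b: "b \<in> listset (Blk n r)" "Phi n r b = g"
        using Suc.IH z(3) unfolding bij_betw_def by (metis imageE)
      have "a @ b \<in> listset (Blk n (Suc r))" using a b by (auto simp: listset_append_iff)
      moreover have "Phi n (Suc r) (a @ b) = z" using a b z by (simp del: Phi.simps add: Phi_append)
      ultimately show "z \<in> Phi n (Suc r) ` listset (Blk n (Suc r))" by (metis imageI)
    qed
  qed
  show ?case using inj img unfolding bij_betw_def by (rule conjI)
qed

lemma prob_unif:
  "measure_pmf.prob (unif_hom r n) {\<sigma>. P \<sigma>}
     = real (card {xs \<in> listset (Blk n r). P (Phi n r xs)}) / real (card (listset (Blk n r)))"
proof -
  define L where "L = listset (Blk n r)"
  have L: "finite L" "L \<noteq> {}" using listset_finite_ne[OF Blk_ok] by (auto simp: L_def)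
  have bij: "bij_betw (Phi n r) L (homs r n)" using Phi_bij by (simp add: L_def)
  have img: "Phi n r ` L = homs r n" using bij by (simp add: bij_betw_def)
  have H: "finite (homs r n)" "homs r n \<noteq> {}"
    using L unfolding img[symmetric] by auto
  have c1: "card (homs r n) = card L" using bij_betw_same_card[OF bij] by simp
  have e: "homs r n \<inter> {\<sigma>. P \<sigma>} = Phi n r ` {xs \<in> L. P (Phi n r xs)}"
    unfolding img[symmetric] by blast
  have i: "inj_on (Phi n r) {xs \<in> L. P (Phi n r xs)}"
    by (rule inj_on_subset[OF bij_betw_imp_inj_on[OF bij]]) blast
  have c2: "card (homs r n \<inter> {\<sigma>. P \<sigma>}) = card {xs \<in> L. P (Phi n r xs)}"
    unfolding e by (rule card_image[OF i])
  show ?thesis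
    unfolding unif_hom_def measure_pmf_of_set[OF H(2) H(1)] c1 c2 L_def ..
qed



definition Dset :: "nat \<Rightarrow> nat \<Rightarrow> (nat\<Rightarrow>nat\<Rightarrow>nat) \<Rightarrow> (nat\<Rightarrow>nat\<Rightarrow>nat) \<Rightarrow> (nat\<times>nat) set" where
  "Dset r n \<sigma> \<tau> = {(v,i). v < n \<and> i < r \<and> \<sigma> i v \<noteq> \<tau> i v}"

lemma Dset_finite: "finite (Dset r n \<sigma> \<tau>)"
  by (rule finite_subset[of _ "{..<n} \<times> {..<r}"]) (auto simp: Dset_def)

lemma cut_le: "cut_size r n \<sigma> V \<le> cut_size r n \<tau> V + card (Dset r n \<sigma> \<tau>)"
proof -
  define C where "C \<sigma> = {(v, i). v < n \<and> i < r \<and> ((v \<in> V) \<noteq> (\<sigma> i v \<in> V))}" for \<sigma> :: "nat\<Rightarrow>nat\<Rightarrow>nat"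
  have fin: "finite (C \<tau>)"
    by (rule finite_subset[of _ "{..<n} \<times> {..<r}"]) (auto simp: C_def)
  have "C \<sigma> \<subseteq> C \<tau> \<union> Dset r n \<sigma> \<tau>" by (auto simp: C_def Dset_def)
  then have "card (C \<sigma>) \<le> card (C \<tau> \<union> Dset r n \<sigma> \<tau>)"
    by (intro card_mono) (use fin Dset_finite in auto)
  also have "\<dots> \<le> card (C \<tau>) + card (Dset r n \<sigma> \<tau>)" by (rule card_Un_le)
  finally show ?thesis by (simp add: cut_size_def C_def)
qed

lemma bis_ex: "is_bisection n {..<n div 2}"
proof -
  have "{..<n} - {..<n div 2} = {n div 2..<n}" by auto
  then show ?thesis unfolding is_bisection_def by auto
qed

lemma bis_fin: "finite {V. is_bisection n V}"
  by (rule finite_subset[of _ "Pow {..<n}"]) (auto simp: is_bisection_def)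

lemma mcut_eq: "mcut r n \<sigma> = Min (cut_size r n \<sigma> ` {V. is_bisection n V})"
  unfolding mcut_def by (rule arg_cong[where f=Min]) blast

lemma mcut_lip: "mcut r n \<sigma> \<le> mcut r n \<tau> + card (Dset r n \<sigma> \<tau>)"
proof -
  have ne: "{V. is_bisection n V} \<noteq> {}" using bis_ex by blast
  have "mcut r n \<tau> \<in> cut_size r n \<tau> ` {V. is_bisection n V}"
    unfolding mcut_eq by (rule Min_in) (use bis_fin ne in auto)
  then obtain V where V: "is_bisection n V" "cut_size r n \<tau> V = mcut r n \<tau>" by auto
  have "mcut r n \<sigma> \<le> cut_size r n \<sigma> V"
    unfolding mcut_eq by (rule Min_le) (use bis_fin V in auto)
  also have "\<dots> \<le> mcut r n \<tau> + card (Dset r n \<sigma> \<tau>)" using cut_le[of r n \<sigma> V \<tau>] V by simp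
  finally show ?thesis .
qed

lemma mcut_le: "mcut r n \<sigma> \<le> n * r"
proof -
  have "mcut r n \<sigma> \<le> cut_size r n \<sigma> {..<n div 2}"
    unfolding mcut_eq by (rule Min_le) (use bis_fin bis_ex in auto)
  also have "\<dots> \<le> card ({..<n} \<times> {..<r})"
    unfolding cut_size_def by (rule card_mono) auto
  finally show ?thesis by simp
qed

lemma onediff_append:
  assumes "length a = length a'" "onediff (a @ b) (a' @ b')"
  shows "(a = a' \<and> onediff b b') \<or> (onediff a a' \<and> b = b')"
proof -
  obtain us x y vs where e: "a @ b = us @ x # vs" "a' @ b' = us @ y # vs"
    using assms(2) unfolding onediff_def by blast
  define k where "k = length a"
  have a: "a = take k (us @ x # vs)" "b = drop k (us @ x # vs)"
    using e(1) unfolding k_def by (metis append_eq_conv_conj)+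
  have a': "a' = take k (us @ y # vs)" "b' = drop k (us @ y # vs)"
    using e(2) assms(1) unfolding k_def by (metis append_eq_conv_conj)+
  show ?thesis
  proof (cases "k \<le> length us")
    case True
    then have "a = a'" "b = drop k us @ x # vs" "b' = drop k us @ y # vs"
      using a a' by auto
    then show ?thesis unfolding onediff_def by blast
  next
    case False
    obtain m where m: "k - length us = Suc m" using False by (cases "k - length us") auto
    then have "a = us @ x # take m vs" "a' = us @ y # take m vs" "b = b'"
      using a a' False by auto
    then show ?thesis unfolding onediff_def by blast
  qed
qed

lemma Phi_D:
  "xs \<in> listset (Blk n r) \<Longrightarrow> ys \<in> listset (Blk n r) \<Longrightarrow> onediff xs ys \<Longrightarrow>
     card (Dset r n (Phi n r xs) (Phi n r ys)) \<le> 3"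
proof (induction r arbitrary: xs ys)
  case 0 then show ?case by (simp add: Dset_def)
next
  case (Suc r)
  obtain a b a' b' where ab: "xs = a @ b" "a \<in> listset (R n)" "b \<in> listset (Blk n r)"
      and ab': "ys = a' @ b'" "a' \<in> listset (R n)" "b' \<in> listset (Blk n r)"
    using Suc.prems by (auto simp: listset_append_iff)
  have len: "length a = length a'" using listset_length[OF ab(2)] listset_length[OF ab'(2)] by simp
  have P1: "Phi n (Suc r) xs = (Phi n r b)(r := FY a)" unfolding ab(1) by (rule Phi_append[OF ab(2)])
  have P2: "Phi n (Suc r) ys = (Phi n r b')(r := FY a')" unfolding ab'(1) by (rule Phi_append[OF ab'(2)])
  from onediff_append[OF len] Suc.prems(3) ab(1) ab'(1)
  consider "a = a'" "onediff b b'" | "onediff a a'" "b = b'" by blast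
  then show ?case
  proof cases
    case 1
    have "Dset (Suc r) n (Phi n (Suc r) xs) (Phi n (Suc r) ys) = Dset r n (Phi n r b) (Phi n r b')"
      unfolding P1 P2 Dset_def using 1 by (auto simp: less_Suc_eq)
    then show ?thesis using Suc.IH[OF ab(3) ab'(3) 1(2)] by (simp del: Phi.simps)
  next
    case 2
    obtain us x y vs where uv: "a = us @ x # vs" "a' = us @ y # vs"
      using 2(1) unfolding onediff_def by blast
    have sub: "Dset (Suc r) n (Phi n (Suc r) xs) (Phi n (Suc r) ys)
           \<subseteq> (\<lambda>v. (v, r)) ` {v. FY a v \<noteq> FY a' v}"
      unfolding P1 P2 Dset_def using 2 by (auto simp: less_Suc_eq)
    have fc: "finite {v. FY a v \<noteq> FY a' v}" "card {v. FY a v \<noteq> FY a' v} \<le> 3"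
      using FY_onediff_aux[of us x vs y] uv by auto
    have "card (Dset (Suc r) n (Phi n (Suc r) xs) (Phi n (Suc r) ys))
          \<le> card ((\<lambda>v. (v, r)) ` {v. FY a v \<noteq> FY a' v})"
      by (rule card_mono[OF _ sub]) (use fc in auto)
    also have "\<dots> \<le> 3" using card_image_le[OF fc(1), of "\<lambda>v. (v, r)"] fc(2) by linarith
    finally show ?thesis .
  qed
qed



lemma elog_div_le:
  assumes "n > 0" "0 \<le> p" "p \<le> exp (- c * real n)"
  shows "elog p / ereal (real n) \<le> ereal (- c)"
proof (cases "p = 0")
  case True
  then show ?thesis using assms by (simp add: elog_def divide_ereal_def)
next
  case False
  then have p: "p > 0" using assms by simp
  have "ln p \<le> ln (exp (- c * real n))" using p assms by (subst ln_le_cancel_iff) auto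
  then have "ln p \<le> - c * real n" by simp
  then have "ln p / real n \<le> - c" using assms by (simp add: pos_divide_le_eq)
  then show ?thesis using False assms by (simp add: elog_def)
qed

lemma ratio_nonneg: "mcut_ratio r n \<sigma> \<ge> 0"
  by (simp add: mcut_ratio_def)

lemma F_bd:
  assumes "xs \<in> listset (Blk n r)" "ys \<in> listset (Blk n r)" "onediff xs ys"
  shows "real (mcut r n (Phi n r xs)) - real (mcut r n (Phi n r ys)) \<le> 3"
proof -
  have "mcut r n (Phi n r xs) \<le> mcut r n (Phi n r ys) + card (Dset r n (Phi n r xs) (Phi n r ys))"
    by (rule mcut_lip)
  moreover have "card (Dset r n (Phi n r xs) (Phi n r ys)) \<le> 3" by (rule Phi_D[OF assms])
  ultimately show ?thesis by linarith
qed

lemma tail_main: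
  assumes "r > 0" "n > 0" "t > 0"
  shows "real (card {xs \<in> listset (Blk n r). real (mcut r n (Phi n r xs))
              \<le> avg (listset (Blk n r)) (\<lambda>xs. real (mcut r n (Phi n r xs))) - t})
         \<le> real (card (listset (Blk n r))) * exp (- (t^2) / (18 * (real r * real n)))"
proof -
  have "real (card {xs \<in> listset (Blk n r). real (mcut r n (Phi n r xs))
              \<le> avg (listset (Blk n r)) (\<lambda>xs. real (mcut r n (Phi n r xs))) - t})
         \<le> real (card (listset (Blk n r))) * exp (- (t^2) / (2 * 3^2 * real (length (Blk n r))))"
    by (rule mcd_tail[where f="\<lambda>xs. real (mcut r n (Phi n r xs))"])
       (use assms Blk_ok F_bd in auto)
  then show ?thesis by simp
qed

lemma key:
  fixes r :: nat and eps_c \<epsilon> :: real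
  assumes lim: "\<forall>\<eta>>0. (\<lambda>n. measure_pmf.prob (unif_hom r n)
              {\<sigma>. \<bar>mcut_ratio r n \<sigma> - eps_c\<bar> > \<eta>}) \<longlonglongrightarrow> 0"
    and eps: "\<epsilon> < eps_c" "0 \<le> \<epsilon>" and r: "r > 0"
    and \<delta>: "0 < \<delta>" "\<delta> < (eps_c - \<epsilon>) / 2"
  shows "\<forall>\<^sub>F n in sequentially. measure_pmf.prob (unif_hom r n) {\<sigma>. mcut_ratio r n \<sigma> < \<epsilon> + \<delta>}
            \<le> exp (- ((eps_c - \<epsilon>)^2 * real r / 288) * real n)"
proof -
  define g where "g = eps_c - \<epsilon>"
  have g: "g > 0" using eps by (simp add: g_def)
  have ec: "eps_c > 0" using eps by simp
  define \<eta> where "\<eta> = g / 8"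
  have \<eta>: "\<eta> > 0" using g by (simp add: \<eta>_def)
  have ec_eta: "eps_c - \<eta> \<ge> 0" using eps by (simp add: \<eta>_def g_def)
  define pn where "pn n = measure_pmf.prob (unif_hom r n) {\<sigma>. \<bar>mcut_ratio r n \<sigma> - eps_c\<bar> > \<eta>}" for n
  have "pn \<longlonglongrightarrow> 0" unfolding pn_def by (rule lim[rule_format, OF \<eta>])
  then have ev: "\<forall>\<^sub>F n in sequentially. pn n < \<eta> / eps_c"
    by (rule order_tendstoD(2)) (use \<eta> ec in simp)
  have ev1: "\<forall>\<^sub>F n in sequentially. n > 0" by (rule eventually_gt_at_top)
  show ?thesis
    using ev ev1
  proof eventually_elim
    case (elim n)
    define L where "L = listset (Blk n r)"
    define F where "F xs = real (mcut r n (Phi n r xs))" for xs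
    define E where "E = avg L F"
    define rn where "rn = real r * real n"
    have rn: "rn > 0" using r elim by (simp add: rn_def)
    have Lf: "finite L" "L \<noteq> {}" using listset_finite_ne[OF Blk_ok] by (auto simp: L_def)
    have cL: "real (card L) > 0" using Lf by (simp add: card_gt_0_iff)
    have ratio: "mcut_ratio r n (Phi n r xs) = F xs / rn" for xs
      by (simp add: mcut_ratio_def F_def rn_def)
    define G where "G = {xs \<in> L. \<bar>mcut_ratio r n (Phi n r xs) - eps_c\<bar> > \<eta>}"
    have pnG: "pn n = real (card G) / real (card L)"
      unfolding pn_def G_def L_def by (rule prob_unif)
    have Gsub: "G \<subseteq> L" by (auto simp: G_def)
    have cG: "real (card G) \<le> \<eta> / eps_c * real (card L)"
      using elim(1) cL unfolding pnG by (simp add: divide_less_eq less_imp_le)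
    have F0: "F xs \<ge> 0" for xs by (simp add: F_def)
    have Fg: "F xs \<ge> (eps_c - \<eta>) * rn" if "xs \<in> L - G" for xs
    proof -
      have "mcut_ratio r n (Phi n r xs) \<ge> eps_c - \<eta>" using that by (auto simp: G_def)
      then have "F xs / rn \<ge> eps_c - \<eta>" by (simp add: ratio)
      then show ?thesis using rn by (simp add: le_divide_eq)
    qed
    have "(\<Sum>xs\<in>L. F xs) \<ge> (\<Sum>xs\<in>L - G. F xs)"
      by (rule sum_mono2) (use Lf F0 in auto)
    moreover have "(\<Sum>xs\<in>L - G. F xs) \<ge> (\<Sum>xs\<in>L - G. (eps_c - \<eta>) * rn)"
      by (rule sum_mono) (use Fg in auto)
    moreover have "(\<Sum>xs\<in>L - G. (eps_c - \<eta>) * rn) = (real (card L) - real (card G)) * ((eps_c - \<eta>) * rn)"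
      using Gsub Lf by (simp add: card_Diff_subset finite_subset of_nat_diff card_mono)
    ultimately have S: "(\<Sum>xs\<in>L. F xs) \<ge> (real (card L) - real (card G)) * ((eps_c - \<eta>) * rn)"
      by linarith
    have "(real (card L) - real (card G)) * ((eps_c - \<eta>) * rn)
          \<ge> (real (card L) - \<eta> / eps_c * real (card L)) * ((eps_c - \<eta>) * rn)"
      using cG rn ec_eta by (intro mult_right_mono) auto
    also have "(real (card L) - \<eta> / eps_c * real (card L)) * ((eps_c - \<eta>) * rn)
          = real (card L) * rn * ((eps_c - \<eta>) * (1 - \<eta> / eps_c))"
      by (simp add: algebra_simps)
    finally have S2: "(\<Sum>xs\<in>L. F xs) \<ge> real (card L) * rn * ((eps_c - \<eta>) * (1 - \<eta> / eps_c))"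
      using S by linarith
    have "(eps_c - \<eta>) * (1 - \<eta> / eps_c) = eps_c - 2 * \<eta> + \<eta>^2 / eps_c"
      using ec by (simp add: field_simps power2_eq_square)
    also have "\<dots> \<ge> eps_c - 2 * \<eta>" using ec by simp
    finally have "(eps_c - \<eta>) * (1 - \<eta> / eps_c) \<ge> eps_c - 2 * \<eta>" .
    then have "real (card L) * rn * ((eps_c - \<eta>) * (1 - \<eta> / eps_c)) \<ge> real (card L) * rn * (eps_c - 2 * \<eta>)"
      using cL rn by (intro mult_left_mono) auto
    with S2 have "(\<Sum>xs\<in>L. F xs) \<ge> real (card L) * (rn * (eps_c - 2 * \<eta>))" by (simp add: mult.assoc)
    then have EE: "E \<ge> rn * (eps_c - 2 * \<eta>)"
      using cL unfolding E_def avg_def by (simp add: le_divide_eq mult.commute)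
    define t where "t = g / 4 * rn"
    have t: "t > 0" using g rn by (simp add: t_def)
    have sub: "{xs \<in> L. mcut_ratio r n (Phi n r xs) < \<epsilon> + \<delta>} \<subseteq> {xs \<in> L. F xs \<le> avg L F - t}"
    proof safe
      fix xs assume "xs \<in> L" "mcut_ratio r n (Phi n r xs) < \<epsilon> + \<delta>"
      then have "F xs / rn < \<epsilon> + \<delta>" by (simp add: ratio)
      then have "F xs < (\<epsilon> + \<delta>) * rn" using rn by (simp add: divide_less_eq)
      also have "\<dots> \<le> (eps_c - g / 2) * rn" using \<delta> rn by (intro mult_right_mono) (auto simp: g_def field_simps)
      also have "\<dots> = rn * (eps_c - 2 * \<eta>) - t" by (simp add: t_def \<eta>_def algebra_simps)
      also have "\<dots> \<le> avg L F - t" using EE by (simp add: E_def)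
      finally show "F xs \<le> avg L F - t" by simp
    qed
    have "measure_pmf.prob (unif_hom r n) {\<sigma>. mcut_ratio r n \<sigma> < \<epsilon> + \<delta>}
        = real (card {xs \<in> L. mcut_ratio r n (Phi n r xs) < \<epsilon> + \<delta>}) / real (card L)"
      unfolding L_def by (rule prob_unif)
    also have "\<dots> \<le> real (card {xs \<in> L. F xs \<le> avg L F - t}) / real (card L)"
      using sub Lf cL by (intro divide_right_mono card_mono[THEN of_nat_mono]) auto
    also have "\<dots> \<le> real (card L) * exp (- (t^2) / (18 * (real r * real n))) / real (card L)"
      using tail_main[OF r elim(2) t] cL unfolding L_def F_def by (intro divide_right_mono) auto
    also have "\<dots> = exp (- (t^2) / (18 * rn))" using cL by (simp add: rn_def)
    also have "- (t^2) / (18 * rn) = - ((eps_c - \<epsilon>)^2 * real r / 288) * real n"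
      using rn r elim(2) by (simp add: t_def rn_def g_def field_simps power2_eq_square)
    finally show ?case .
  qed
qed


lemma Liminf_neg:
  assumes "c > 0" "\<forall>\<^sub>F n in sequentially. n > 0 \<and> 0 \<le> p n \<and> p n \<le> exp (- c * real n)"
  shows "Liminf sequentially (\<lambda>n. elog (p n) / ereal (real n)) < 0"
proof -
  have "Liminf sequentially (\<lambda>n. elog (p n) / ereal (real n)) \<le> ereal (- c)"
    by (rule Liminf_le) (use assms(2) in \<open>auto elim!: eventually_mono intro: elog_div_le\<close>)
  also have "\<dots> < 0" using assms(1) by simp
  finally show ?thesis .
qed

theorem mainTheorem17:
  fixes r :: nat and eps_c \<epsilon> :: real
  assumes eps_c_limit: "\<forall>\<eta>>0. (\<lambda>n. measure_pmf.prob (unif_hom r n)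
              {\<sigma>. \<bar>mcut_ratio r n \<sigma> - eps_c\<bar> > \<eta>}) \<longlonglongrightarrow> 0"
    and "\<epsilon> < eps_c"
  shows "\<exists>\<delta>0>0. \<forall>\<delta>. 0 < \<delta> \<and> \<delta> < \<delta>0 \<longrightarrow>
           Liminf sequentially (\<lambda>n. elog (measure_pmf.prob (unif_hom r n)
              {\<sigma>. mcut_ratio r n \<sigma> < \<epsilon> + \<delta>}) / ereal (real n)) < 0"
proof (cases "\<epsilon> < 0")
  case True
  show ?thesis
  proof (intro exI[of _ "- \<epsilon>"] conjI allI impI)
    show "0 < - \<epsilon>" using True by simp
    fix \<delta> :: real assume d: "0 < \<delta> \<and> \<delta> < - \<epsilon>"
    have e: "{\<sigma>. mcut_ratio r n \<sigma> < \<epsilon> + \<delta>} = {}" for n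
    proof -
      have "\<not> mcut_ratio r n \<sigma> < \<epsilon> + \<delta>" for \<sigma>
        using d ratio_nonneg[of r n \<sigma>] by linarith
      then show ?thesis by blast
    qed
    show "Liminf sequentially (\<lambda>n. elog (measure_pmf.prob (unif_hom r n)
              {\<sigma>. mcut_ratio r n \<sigma> < \<epsilon> + \<delta>}) / ereal (real n)) < 0"
      by (rule Liminf_neg[where c=1]) (auto simp: e intro: eventually_gt_at_top)
  qed
next
  case False
  then have eps0: "0 \<le> \<epsilon>" by simp
  have ec: "eps_c > 0" using eps0 assms(2) by simp
  have r: "r > 0"
  proof (rule ccontr)
    assume "\<not> r > 0"
    then have r0: "r = 0" by simp
    have "(\<lambda>n. measure_pmf.prob (unif_hom r n) {\<sigma>. \<bar>mcut_ratio r n \<sigma> - eps_c\<bar> > eps_c / 2}) \<longlonglongrightarrow> 0"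
      using eps_c_limit[rule_format, of "eps_c / 2"] ec by (simp only: half_gt_zero_iff)
    moreover have "{\<sigma>. \<bar>mcut_ratio r n \<sigma> - eps_c\<bar> > eps_c / 2} = UNIV" for n
      using ec r0 by (auto simp: mcut_ratio_def)
    ultimately have "(\<lambda>n. 1::real) \<longlonglongrightarrow> 0" by simp
    then show False by (simp add: LIMSEQ_const_iff)
  qed
  show ?thesis
  proof (intro exI[of _ "(eps_c - \<epsilon>) / 2"] conjI allI impI)
    show "0 < (eps_c - \<epsilon>) / 2" using assms(2) by simp
    fix \<delta> :: real assume d: "0 < \<delta> \<and> \<delta> < (eps_c - \<epsilon>) / 2"
    have k: "\<forall>\<^sub>F n in sequentially. measure_pmf.prob (unif_hom r n) {\<sigma>. mcut_ratio r n \<sigma> < \<epsilon> + \<delta>}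
            \<le> exp (- ((eps_c - \<epsilon>)^2 * real r / 288) * real n)"
      by (rule key[OF eps_c_limit assms(2) eps0 r]) (use d in auto)
    show "Liminf sequentially (\<lambda>n. elog (measure_pmf.prob (unif_hom r n)
              {\<sigma>. mcut_ratio r n \<sigma> < \<epsilon> + \<delta>}) / ereal (real n)) < 0"
      by (rule Liminf_neg[where c="(eps_c - \<epsilon>)^2 * real r / 288"])
         (use assms(2) r in simp, use eventually_conj[OF k eventually_gt_at_top[of 0]] in \<open>auto elim!: eventually_mono\<close>)
  qed
qed

end
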